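(* Let $A$ be a finite set. Then every strongly irreducible subshift $X \subset A^{\mathbb Z}$ is a W-subshift.
   Context: A subshift of $A^{\mathbb Z}$ is a closed shift-invariant subset. $X$ is strongly irreducible if there is a finite $\Delta\subset\mathbb Z$ such that for all finite $\Omega_1,\Omega_2\subset\mathbb Z$ with $(\Omega_1-\Delta)\cap\Omega_2=\varnothing$ and all $x_1,x_2\in X$ there is $x\in X$ with $x|_{\Omega_1}=x_1|_{\Omega_1}$, $x|_{\Omega_2}=x_2|_{\Omega_2}$. $L(X)$ is the set of finite words (including the empty word) appearing as $x(i)\cdots x(j)$ in some $x\in X$; $|w|$ is word length. $X$ is a W-subshift if there is an integer $n_0\ge0$ such that for all $u,v\in L(X)$ there is $c\in L(X)$ with $|c|\le n_0$ and $ucv\in L(X)$. *)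

theory Defs
  imports "HOL-Analysis.Analysis"
begin

text \<open>Configurations in A^Z are functions int => 'a, where the finite alphabet A is
  the (finite) type 'a. A^Z carries the prodiscrete (product of discrete) topology.\<close>

definition shift_invariant :: "(int \<Rightarrow> 'a) set \<Rightarrow> bool" where
  "shift_invariant X \<longleftrightarrow> (\<forall>k::int. \<forall>x\<in>X. (\<lambda>i. x (i + k)) \<in> X)"

definition subshift :: "(int \<Rightarrow> 'a) set \<Rightarrow> bool" where
  "subshift X \<longleftrightarrow>
     closedin (product_topology (\<lambda>_::int. discrete_topology (UNIV::'a set)) UNIV) X
     \<and> shift_invariant X"

definition strongly_irreducible :: "(int \<Rightarrow> 'a) set \<Rightarrow> bool" where
  "strongly_irreducible X \<longleftrightarrow>
     (\<exists>\<Delta>::int set. finite \<Delta> \<and>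
        (\<forall>\<Omega>1 \<Omega>2. finite \<Omega>1 \<and> finite \<Omega>2 \<and>
           {a - d | a d. a \<in> \<Omega>1 \<and> d \<in> \<Delta>} \<inter> \<Omega>2 = {} \<longrightarrow>
           (\<forall>x1\<in>X. \<forall>x2\<in>X. \<exists>x\<in>X.
              (\<forall>i\<in>\<Omega>1. x i = x1 i) \<and> (\<forall>i\<in>\<Omega>2. x i = x2 i))))"

definition language :: "(int \<Rightarrow> 'a) set \<Rightarrow> 'a list set" where
  "language X = {[]} \<union> {map (\<lambda>n. x (i + int n)) [0..<m] | x i m. x \<in> X}"

definition W_subshift :: "(int \<Rightarrow> 'a) set \<Rightarrow> bool" where
  "W_subshift X \<longleftrightarrow>
     subshift X \<and>
     (\<exists>n0::nat. \<forall>u\<in>language X. \<forall>v\<in>language X.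
        \<exists>c\<in>language X. length c \<le> n0 \<and> u @ c @ v \<in> language X)"

end

theory Submission
  imports Defs
begin

lemma lang_rep:
  assumes "X \<noteq> {}" "u \<in> language X"
  shows "\<exists>x i m. x \<in> X \<and> u = map (\<lambda>n. x (i + int n)) [0..<m]"
  using assms unfolding language_def by (auto intro: exI[where x=0])

lemma lang_intro:
  assumes "x \<in> X" shows "map (\<lambda>n. x (i + int n)) [0..<m] \<in> language X"
  using assms unfolding language_def by blast

theorem proposition4p5:
  fixes X :: "(int \<Rightarrow> 'a::finite) set"
  assumes "subshift X"
    and "strongly_irreducible X"
  shows "W_subshift X"
proof -
  have SI: "shift_invariant X" using assms(1) subshift_def by blast
  obtain \<Delta> :: "int set" where fin: "finite \<Delta>" and SIR0:
    "\<forall>\<Omega>1 \<Omega>2. finite \<Omega>1 \<and> finite \<Omega>2 \<and>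
           {a - d | a d. a \<in> \<Omega>1 \<and> d \<in> \<Delta>} \<inter> \<Omega>2 = {} \<longrightarrow>
           (\<forall>x1\<in>X. \<forall>x2\<in>X. \<exists>x\<in>X.
              (\<forall>i\<in>\<Omega>1. x i = x1 i) \<and> (\<forall>i\<in>\<Omega>2. x i = x2 i))"
    using assms(2) unfolding strongly_irreducible_def by (elim exE conjE) (rule that)
  define n0 where "n0 = nat (Max (insert 0 (abs ` \<Delta>)))"
  have bd: "\<And>d. d \<in> \<Delta> \<Longrightarrow> -d \<le> int n0"
  proof -
    fix d assume "d \<in> \<Delta>"
    hence "\<bar>d\<bar> \<le> Max (insert 0 (abs ` \<Delta>))" using fin by (intro Max_ge) auto
    thus "-d \<le> int n0" unfolding n0_def by linarith
  qed
  have "\<forall>u\<in>language X. \<forall>v\<in>language X.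
        \<exists>c\<in>language X. length c \<le> n0 \<and> u @ c @ v \<in> language X"
  proof (cases "X = {}")
    case True
    thus ?thesis by (auto simp: language_def)
  next
    case False
    show ?thesis
    proof (intro ballI)
      fix u v assume u: "u \<in> language X" and v: "v \<in> language X"
      obtain x1 i m where x1: "x1 \<in> X" and ueq: "u = map (\<lambda>n. x1 (i + int n)) [0..<m]"
        using lang_rep[OF False u] by blast
      obtain x2 j k where x2: "x2 \<in> X" and veq: "v = map (\<lambda>n. x2 (j + int n)) [0..<k]"
        using lang_rep[OF False v] by blast
      define y1 where "y1 = (\<lambda>t. x1 (t + i))"
      define y2 where "y2 = (\<lambda>t. x2 (t + (j - int (m + n0))))"
      have y1: "y1 \<in> X" using SI x1 unfolding shift_invariant_def y1_def by blast
      have y2: "y2 \<in> X" using SI x2 unfolding shift_invariant_def y2_def by blast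
      define O1 where "O1 = {0..<int m}"
      define O2 where "O2 = {int (m+n0)..<int (m+n0+k)}"
      have disj: "{a - d | a d. a \<in> O1 \<and> d \<in> \<Delta>} \<inter> O2 = {}"
      proof -
        { fix a d assume "a \<in> O1" "d \<in> \<Delta>"
          hence "a - d < int (m + n0)" using bd[of d] unfolding O1_def by auto }
        thus ?thesis unfolding O2_def by fastforce
      qed
      obtain x where x: "x \<in> X" and e1: "\<forall>t\<in>O1. x t = y1 t" and e2: "\<forall>t\<in>O2. x t = y2 t"
        proof -
        have f1: "finite O1" "finite O2" unfolding O1_def O2_def by auto
        have "\<forall>x1\<in>X. \<forall>x2\<in>X. \<exists>x\<in>X.
              (\<forall>i\<in>O1. x i = x1 i) \<and> (\<forall>i\<in>O2. x i = x2 i)"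
          using SIR0 f1 disj by blast
        thus ?thesis using y1 y2 that by blast
      qed
      define c where "c = map (\<lambda>n. x (int m + int n)) [0..<n0]"
      have "c \<in> language X" unfolding c_def by (rule lang_intro[OF x])
      moreover have "length c \<le> n0" unfolding c_def by simp
      moreover have "u @ c @ v = map (\<lambda>n. x (0 + int n)) [0..<m+n0+k]"
      proof (rule nth_equalityI)
        show "length (u @ c @ v) = length (map (\<lambda>n. x (0 + int n)) [0..<m+n0+k])"
          using ueq veq c_def by simp
      next
        fix p assume "p < length (u @ c @ v)"
        hence p: "p < m + n0 + k" using ueq veq c_def by simp
        show "(u @ c @ v) ! p = map (\<lambda>n. x (0 + int n)) [0..<m+n0+k] ! p"
        proof (cases "p < m")
          case True
          thus ?thesis using e1 p unfolding ueq O1_def y1_def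
            by (auto simp: nth_append add.commute)
        next
          case nm: False
          show ?thesis
          proof (cases "p < m + n0")
            case True
            thus ?thesis using nm p unfolding ueq c_def
              by (auto simp: nth_append)
          next
            case False
            have "x (int p) = y2 (int p)" using e2 p False unfolding O2_def by auto
            thus ?thesis using nm False p unfolding ueq c_def veq y2_def
              by (auto simp: nth_append algebra_simps)
          qed
        qed
      qed
      ultimately show "\<exists>c\<in>language X. length c \<le> n0 \<and> u @ c @ v \<in> language X"
        using lang_intro[OF x] by metis
    qed
  qed
  thus ?thesis unfolding W_subshift_def using assms(1) by blast
qed

end
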